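(* Let $p_0<0$, $\alpha\in(0,1)$, $\mathbb{S}:=\mathbb{R}/(2\pi\mathbb{Z})$, $\Omega:=\mathbb{S}\times(p_0,0)$, and let $N\ge3$ be an integer. Let $u_1,\dots,u_5$ be functions on $\overline\Omega$ with $\partial_q^n u_i\in C^\alpha(\overline\Omega)$ for all $0\le n\le N$ and $1\le i\le 5$. \begin{itemize} \item[(i)] If $L\ge1$ and $\|\partial_q^n u_i\|_\alpha\le L^{n-3/2}(n-2)!$ for all $2\le n\le N$ (and all $i$), then there exists a constant $C_0>1$ such that \[\|\partial_q^n(u_1u_2u_3u_4u_5)\|_\alpha\le C_0\Big(1+\sum_{i=1}^5\sum_{l=0}^1\|\partial_q^l u_i\|_\alpha\Big)^{16}L^{n-3/2}(n-2)!\quad\text{for all } 2\le n\le N.\] \item[(ii)] If $L\ge1$ and $\|\partial_q^n u_i\|_\alpha\le L^{n-1}(n-2)!$ for all $2\le n\le N$ (and all $i$), then there exists a constant $C_1>1$ such that \[\|\partial_q^n(u_1u_2u_3)\|_\alpha\le C_1\Big(1+\sum_{i=1}^3\sum_{l=0}^1\|\partial_q^l u_i\|_\alpha\Big)^{6}L^{n-1}(n-2)!\quad\text{for all } 2\le n\le N.\] \item[(iii)] If $L\ge1$ and $\|\partial_q^n u_i\|_\alpha\le L^{n-2}(n-3)!$ for all $3\le n\le N$ (and all $i$), then there exists a constant $C_2>1$ such that \[\|\partial_q^n(u_1u_2)\|_\alpha\le C_2\Big(1+\sum_{i=1}^2\sum_{l=0}^2\|\partial_q^l u_i\|_\alpha\Big)^{2}L^{n-2}(n-3)!\quad\text{for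 all } 3\le n\le N.\] \end{itemize} The constants $C_0$, $C_1$ and $C_2$ do not depend on $L$.
   Context: $\|\cdot\|_\alpha$ denotes the norm of the Hölder space $C^\alpha(\overline\Omega)$, normalized so that $\|uv\|_\alpha\le\|u\|_\alpha\|v\|_\alpha$. $\partial_q$ denotes differentiation with respect to the first variable $q\in\mathbb{S}$. *)

theory Defs
  imports "HOL-Analysis.Analysis"
begin

text \<open>Closed domain: points (q,p) with q in R (representing S = R/(2 pi Z)) and p in [p0,0].\<close>
definition omega_bar :: "real \<Rightarrow> (real \<times> real) set" where
  "omega_bar p0 = UNIV \<times> {p0..0}"

definition distS :: "real \<Rightarrow> real \<Rightarrow> real" where
  "distS q q' = (INF k::int. \<bar>q - q' - 2 * pi * of_int k\<bar>)"

definition distO :: "real \<times> real \<Rightarrow> real \<times> real \<Rightarrow> real" where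
  "distO x y = sqrt ((distS (fst x) (fst y))\<^sup>2 + (snd x - snd y)\<^sup>2)"

definition holder_quotients :: "real \<Rightarrow> real \<Rightarrow> (real \<times> real \<Rightarrow> real) \<Rightarrow> real set" where
  "holder_quotients \<alpha> p0 f =
     {\<bar>f x - f y\<bar> / (distO x y) powr \<alpha> | x y.
        x \<in> omega_bar p0 \<and> y \<in> omega_bar p0 \<and> distO x y \<noteq> 0}"

text \<open>f is a function on the closure of Omega = S x (p0,0) (2 pi-periodic in q) lying in
  the Hoelder space C^alpha: bounded with finite Hoelder seminorm.\<close>
definition in_holder :: "real \<Rightarrow> real \<Rightarrow> (real \<times> real \<Rightarrow> real) \<Rightarrow> bool" where
  "in_holder \<alpha> p0 f \<longleftrightarrow>
     (\<forall>q p. p \<in> {p0..0} \<longrightarrow> f (q + 2 * pi, p) = f (q, p)) \<and>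
     bdd_above ((\<lambda>x. \<bar>f x\<bar>) ` omega_bar p0) \<and>
     bdd_above (holder_quotients \<alpha> p0 f)"

text \<open>Hoelder norm: sup norm plus Hoelder seminorm (satisfies norm(uv) <= norm u * norm v).\<close>
definition holder_norm :: "real \<Rightarrow> real \<Rightarrow> (real \<times> real \<Rightarrow> real) \<Rightarrow> real" where
  "holder_norm \<alpha> p0 f =
     (SUP x \<in> omega_bar p0. \<bar>f x\<bar>) + Sup (holder_quotients \<alpha> p0 f)"

definition dq :: "nat \<Rightarrow> (real \<times> real \<Rightarrow> real) \<Rightarrow> real \<times> real \<Rightarrow> real" where
  "dq n f = (\<lambda>(q, p). (deriv ^^ n) (\<lambda>t. f (t, p)) q)"

definition q_diff :: "nat \<Rightarrow> real \<Rightarrow> (real \<times> real \<Rightarrow> real) \<Rightarrow> bool" where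
  "q_diff N p0 f \<longleftrightarrow>
     (\<forall>n < N. \<forall>q. \<forall>p \<in> {p0..0}.
        ((deriv ^^ n) (\<lambda>t. f (t, p)) has_real_derivative (deriv ^^ Suc n) (\<lambda>t. f (t, p)) q) (at q))"

definition admissible :: "real \<Rightarrow> real \<Rightarrow> nat \<Rightarrow> (real \<times> real \<Rightarrow> real) \<Rightarrow> bool" where
  "admissible \<alpha> p0 N f \<longleftrightarrow> q_diff N p0 f \<and> (\<forall>n \<le> N. in_holder \<alpha> p0 (dq n f))"

end

theory Submission
  imports Defs
begin


lemma Suc_choose': "Suc n choose k = (n choose k) + (if k = 0 then 0 else (n choose (k-1)))"
  by (cases k) simp_all

lemma leib_deriv:
  fixes F G :: "real \<Rightarrow> real"
  assumes F: "\<forall>m<N. \<forall>q. ((deriv^^m) F has_real_derivative (deriv^^Suc m) F q) (at q)"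
    and G: "\<forall>m<N. \<forall>q. ((deriv^^m) G has_real_derivative (deriv^^Suc m) G q) (at q)"
    and n: "n < N"
  shows "((\<lambda>t. \<Sum>i=0..n. of_nat (n choose i) * (deriv^^i) F t * (deriv^^(n-i)) G t)
     has_real_derivative (\<Sum>i=0..Suc n. of_nat (Suc n choose i) * (deriv^^i) F z * (deriv^^(Suc n-i)) G z)) (at z)"
proof -
  have d: "((\<lambda>t. \<Sum>i=0..n. of_nat (n choose i) * (deriv^^i) F t * (deriv^^(n-i)) G t)
     has_real_derivative (\<Sum>i=0..n. of_nat (n choose i) * ((deriv^^Suc i) F z * (deriv^^(n-i)) G z
        + (deriv^^i) F z * (deriv^^Suc (n-i)) G z))) (at z)"
  proof (rule DERIV_sum)
    fix i assume i: "i \<in> {0..n}"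
    have "((deriv^^i) F has_real_derivative (deriv^^Suc i) F z) (at z)" using F i n by auto
    moreover have "((deriv^^(n-i)) G has_real_derivative (deriv^^Suc (n-i)) G z) (at z)" using G i n by auto
    ultimately show "((\<lambda>t. of_nat (n choose i) * (deriv^^i) F t * (deriv^^(n-i)) G t)
     has_real_derivative of_nat (n choose i) * ((deriv^^Suc i) F z * (deriv^^(n-i)) G z
        + (deriv^^i) F z * (deriv^^Suc (n-i)) G z)) (at z)"
      by (auto intro!: derivative_eq_intros simp: algebra_simps)
  qed
  have sumeq: "(\<Sum>i=0..n. of_nat (n choose i) * ((deriv^^Suc i) F z * (deriv^^(n-i)) G z
        + (deriv^^i) F z * (deriv^^Suc (n-i)) G z)) =
      (\<Sum>i=0..Suc n. of_nat (Suc n choose i) * (deriv^^i) F z * (deriv^^(Suc n-i)) G z)"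
  proof -
    have A: "(\<Sum>i=0..Suc n. of_nat (Suc n choose i) * (deriv^^i) F z * (deriv^^(Suc n-i)) G z)
      = (\<Sum>i=0..Suc n. of_nat (n choose i) * (deriv^^i) F z * (deriv^^(Suc n-i)) G z)
      + (\<Sum>i=0..Suc n. (if i = 0 then 0 else of_nat (n choose (i-1))) * (deriv^^i) F z * (deriv^^(Suc n-i)) G z)"
      unfolding sum.distrib[symmetric] by (rule sum.cong) (auto simp: Suc_choose' algebra_simps)
    have B: "(\<Sum>i=0..Suc n. of_nat (n choose i) * (deriv^^i) F z * (deriv^^(Suc n-i)) G z)
      = (\<Sum>i=0..n. of_nat (n choose i) * (deriv^^i) F z * (deriv^^Suc (n-i)) G z)"
      by (simp add: Suc_diff_le)
    have C: "(\<Sum>i=0..Suc n. (if i = 0 then 0 else of_nat (n choose (i-1))) * (deriv^^i) F z * (deriv^^(Suc n-i)) G z)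
      = (\<Sum>i=0..n. of_nat (n choose i) * (deriv^^Suc i) F z * (deriv^^(n-i)) G z)"
      by (subst sum.atLeast0_atMost_Suc_shift) simp
    show ?thesis unfolding A B C by (simp add: sum.distrib[symmetric] algebra_simps)
  qed
  show ?thesis using d unfolding sumeq .
qed

lemma leib_formula:
  fixes F G :: "real \<Rightarrow> real"
  assumes F: "\<forall>m<N. \<forall>q. ((deriv^^m) F has_real_derivative (deriv^^Suc m) F q) (at q)"
    and G: "\<forall>m<N. \<forall>q. ((deriv^^m) G has_real_derivative (deriv^^Suc m) G q) (at q)"
  shows "n \<le> N \<Longrightarrow> (deriv^^n) (\<lambda>t. F t * G t) =
     (\<lambda>t. \<Sum>i=0..n. of_nat (n choose i) * (deriv^^i) F t * (deriv^^(n-i)) G t)"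
proof (induction n)
  case 0 show ?case by (simp add: fun_eq_iff)
next
  case (Suc n)
  then have IH: "(deriv^^n) (\<lambda>t. F t * G t) =
     (\<lambda>t. \<Sum>i=0..n. of_nat (n choose i) * (deriv^^i) F t * (deriv^^(n-i)) G t)" by simp
  show ?case
  proof
    fix z
    have "(deriv^^Suc n) (\<lambda>t. F t * G t) z = deriv (\<lambda>t. \<Sum>i=0..n. of_nat (n choose i) * (deriv^^i) F t * (deriv^^(n-i)) G t) z"
      using IH by simp
    also have "\<dots> = (\<Sum>i=0..Suc n. of_nat (Suc n choose i) * (deriv^^i) F z * (deriv^^(Suc n-i)) G z)"
      by (rule DERIV_imp_deriv, rule leib_deriv[OF F G]) (use Suc in auto)
    finally show "(deriv^^Suc n) (\<lambda>t. F t * G t) z = (\<Sum>i=0..Suc n. of_nat (Suc n choose i) * (deriv^^i) F z * (deriv^^(Suc n-i)) G z)" .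
  qed
qed

lemma leib_qdiff:
  fixes F G :: "real \<Rightarrow> real"
  assumes F: "\<forall>m<N. \<forall>q. ((deriv^^m) F has_real_derivative (deriv^^Suc m) F q) (at q)"
    and G: "\<forall>m<N. \<forall>q. ((deriv^^m) G has_real_derivative (deriv^^Suc m) G q) (at q)"
  shows "\<forall>m<N. \<forall>q. ((deriv^^m) (\<lambda>t. F t * G t) has_real_derivative (deriv^^Suc m) (\<lambda>t. F t * G t) q) (at q)"
proof (intro allI impI)
  fix m q assume m: "m < N"
  show "((deriv^^m) (\<lambda>t. F t * G t) has_real_derivative (deriv^^Suc m) (\<lambda>t. F t * G t) q) (at q)"
  proof -
    have e1: "(deriv^^m) (\<lambda>t. F t * G t) = (\<lambda>t. \<Sum>i=0..m. of_nat (m choose i) * (deriv^^i) F t * (deriv^^(m-i)) G t)"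
      using leib_formula[OF F G, of m] m by simp
    have e2: "(deriv^^Suc m) (\<lambda>t. F t * G t) = (\<lambda>t. \<Sum>i=0..Suc m. of_nat (Suc m choose i) * (deriv^^i) F t * (deriv^^(Suc m-i)) G t)"
      using leib_formula[OF F G, of "Suc m"] m by simp
    show ?thesis unfolding e1 e2 by (rule leib_deriv[OF F G m])
  qed
qed

definition bh :: "real \<Rightarrow> real \<Rightarrow> (real \<times> real \<Rightarrow> real) \<Rightarrow> bool" where
  "bh \<alpha> p0 f \<longleftrightarrow> bdd_above ((\<lambda>x. \<bar>f x\<bar>) ` omega_bar p0) \<and> bdd_above (holder_quotients \<alpha> p0 f)"

lemma in_holder_bh: "in_holder \<alpha> p0 f \<Longrightarrow> bh \<alpha> p0 f"
  unfolding in_holder_def bh_def by auto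

lemma omega_ne: "p0 \<le> 0 \<Longrightarrow> (0,0) \<in> omega_bar p0"
  unfolding omega_bar_def by auto

lemma distO_nonneg: "distO x y \<ge> 0"
  unfolding distO_def by simp

lemma Q_ne: assumes "p0 < 0" shows "holder_quotients \<alpha> p0 f \<noteq> {}"
proof -
  have "distO (0,0) (0,p0) \<noteq> 0" using assms unfolding distO_def
    by (simp add: add_nonneg_eq_0_iff)
  moreover have "(0,0) \<in> omega_bar p0" "(0,p0) \<in> omega_bar p0" using assms unfolding omega_bar_def by auto
  ultimately show ?thesis unfolding holder_quotients_def by blast
qed

lemma Q_nonneg: "z \<in> holder_quotients \<alpha> p0 f \<Longrightarrow> z \<ge> 0"
  unfolding holder_quotients_def by auto

lemma norm_nonneg: assumes "p0 < 0" "bh \<alpha> p0 f" shows "holder_norm \<alpha> p0 f \<ge> 0"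
proof -
  have "0 \<le> \<bar>f (0,0)\<bar>" by simp
  also have "\<dots> \<le> (SUP x \<in> omega_bar p0. \<bar>f x\<bar>)"
    using assms omega_ne[of p0] unfolding bh_def by (intro cSUP_upper) auto
  finally have 1: "0 \<le> (SUP x \<in> omega_bar p0. \<bar>f x\<bar>)" .
  obtain z where z: "z \<in> holder_quotients \<alpha> p0 f" using Q_ne[OF assms(1)] by blast
  have "0 \<le> z" using Q_nonneg[OF z] .
  also have "z \<le> Sup (holder_quotients \<alpha> p0 f)" using z assms unfolding bh_def by (intro cSup_upper) auto
  finally show ?thesis using 1 unfolding holder_norm_def by simp
qed

definition supn where "supn p0 f = (SUP x \<in> omega_bar p0. \<bar>f x\<bar>)"
definition semin where "semin \<alpha> p0 f = Sup (holder_quotients \<alpha> p0 f)"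

lemma holder_norm_split: "holder_norm \<alpha> p0 f = supn p0 f + semin \<alpha> p0 f"
  unfolding holder_norm_def supn_def semin_def ..

lemma supn_le: "bh \<alpha> p0 f \<Longrightarrow> x \<in> omega_bar p0 \<Longrightarrow> \<bar>f x\<bar> \<le> supn p0 f"
  unfolding supn_def bh_def by (intro cSUP_upper) auto

lemma Q_mem: "x \<in> omega_bar p0 \<Longrightarrow> y \<in> omega_bar p0 \<Longrightarrow> distO x y \<noteq> 0 \<Longrightarrow>
   \<bar>f x - f y\<bar> / distO x y powr \<alpha> \<in> holder_quotients \<alpha> p0 f"
  unfolding holder_quotients_def by blast

lemma semin_le: "bh \<alpha> p0 f \<Longrightarrow> x \<in> omega_bar p0 \<Longrightarrow> y \<in> omega_bar p0 \<Longrightarrow> distO x y \<noteq> 0 \<Longrightarrow>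
   \<bar>f x - f y\<bar> / distO x y powr \<alpha> \<le> semin \<alpha> p0 f"
  unfolding semin_def bh_def by (intro cSup_upper Q_mem) auto

lemma supn_nonneg: "p0 < 0 \<Longrightarrow> bh \<alpha> p0 f \<Longrightarrow> 0 \<le> supn p0 f"
  using supn_le[of \<alpha> p0 f "(0,0)"] omega_ne[of p0] by force

lemma semin_nonneg: assumes "p0 < 0" "bh \<alpha> p0 f" shows "0 \<le> semin \<alpha> p0 f"
proof -
  obtain z where z: "z \<in> holder_quotients \<alpha> p0 f" using Q_ne[OF assms(1)] by blast
  have "0 \<le> z" using Q_nonneg[OF z] .
  also have "z \<le> semin \<alpha> p0 f" using z assms unfolding bh_def semin_def by (intro cSup_upper) auto
  finally show ?thesis .
qed

lemma norm_le:
  assumes p0: "p0 < 0"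
    and A: "\<And>x. x \<in> omega_bar p0 \<Longrightarrow> \<bar>h x\<bar> \<le> a"
    and B: "\<And>x y. x \<in> omega_bar p0 \<Longrightarrow> y \<in> omega_bar p0 \<Longrightarrow> distO x y \<noteq> 0 \<Longrightarrow>
       \<bar>h x - h y\<bar> / distO x y powr \<alpha> \<le> b"
  shows "bh \<alpha> p0 h \<and> holder_norm \<alpha> p0 h \<le> a + b"
proof -
  have b1: "bdd_above ((\<lambda>x. \<bar>h x\<bar>) ` omega_bar p0)" by (rule bdd_aboveI[of _ a]) (use A in blast)
  have b2: "bdd_above (holder_quotients \<alpha> p0 h)" using B unfolding holder_quotients_def
    by (intro bdd_aboveI[of _ b]) blast
  have "supn p0 h \<le> a" unfolding supn_def using A omega_ne[of p0] p0
    by (intro cSUP_least) auto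
  moreover have "semin \<alpha> p0 h \<le> b" unfolding semin_def
  proof (rule cSup_least)
    show "holder_quotients \<alpha> p0 h \<noteq> {}" by (rule Q_ne[OF p0])
    fix z assume "z \<in> holder_quotients \<alpha> p0 h"
    then obtain x y where "z = \<bar>h x - h y\<bar> / distO x y powr \<alpha>" "x \<in> omega_bar p0" "y \<in> omega_bar p0" "distO x y \<noteq> 0"
      unfolding holder_quotients_def by blast
    then show "z \<le> b" using B by blast
  qed
  ultimately show ?thesis using b1 b2 unfolding bh_def holder_norm_split by simp
qed

lemma norm_cong:
  assumes "\<And>x. x \<in> omega_bar p0 \<Longrightarrow> f x = g x"
  shows "bh \<alpha> p0 f = bh \<alpha> p0 g" "holder_norm \<alpha> p0 f = holder_norm \<alpha> p0 g"
proof -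
  have 1: "(\<lambda>x. \<bar>f x\<bar>) ` omega_bar p0 = (\<lambda>x. \<bar>g x\<bar>) ` omega_bar p0"
    using assms by (auto simp: image_def)
  have 2: "holder_quotients \<alpha> p0 f = holder_quotients \<alpha> p0 g"
    unfolding holder_quotients_def by (intro Collect_cong) (metis assms)
  show "bh \<alpha> p0 f = bh \<alpha> p0 g" unfolding bh_def 1 2 ..
  show "holder_norm \<alpha> p0 f = holder_norm \<alpha> p0 g" unfolding holder_norm_def 2
    using 1 by (metis image_image)
qed

lemma pos_D: "distO x y \<noteq> 0 \<Longrightarrow> distO x y powr \<alpha> > 0"
  using distO_nonneg[of x y] by simp

lemma norm_add:
  assumes p0: "p0 < 0" and f: "bh \<alpha> p0 f" and g: "bh \<alpha> p0 g"
  shows "bh \<alpha> p0 (\<lambda>x. f x + g x) \<and> holder_norm \<alpha> p0 (\<lambda>x. f x + g x) \<le> holder_norm \<alpha> p0 f + holder_norm \<alpha> p0 g"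
proof -
  have "bh \<alpha> p0 (\<lambda>x. f x + g x) \<and> holder_norm \<alpha> p0 (\<lambda>x. f x + g x) \<le> (supn p0 f + supn p0 g) + (semin \<alpha> p0 f + semin \<alpha> p0 g)"
  proof (rule norm_le[OF p0])
    fix x assume "x \<in> omega_bar p0"
    then show "\<bar>f x + g x\<bar> \<le> supn p0 f + supn p0 g"
      using supn_le[OF f] supn_le[OF g] by (smt (verit))
  next
    fix x y assume xy: "x \<in> omega_bar p0" "y \<in> omega_bar p0" "distO x y \<noteq> 0"
    have D: "distO x y powr \<alpha> > 0" using pos_D[OF xy(3)] .
    have "\<bar>f x + g x - (f y + g y)\<bar> / distO x y powr \<alpha> \<le> (\<bar>f x - f y\<bar> + \<bar>g x - g y\<bar>) / distO x y powr \<alpha>"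
      using D by (intro divide_right_mono) auto
    also have "\<dots> = \<bar>f x - f y\<bar>/ distO x y powr \<alpha> + \<bar>g x - g y\<bar> / distO x y powr \<alpha>" by (simp add: add_divide_distrib)
    also have "\<dots> \<le> semin \<alpha> p0 f + semin \<alpha> p0 g"
      using semin_le[OF f xy] semin_le[OF g xy] by simp
    finally show "\<bar>f x + g x - (f y + g y)\<bar> / distO x y powr \<alpha> \<le> semin \<alpha> p0 f + semin \<alpha> p0 g" .
  qed
  then show ?thesis unfolding holder_norm_split by simp
qed

lemma norm_scale:
  assumes p0: "p0 < 0" and f: "bh \<alpha> p0 f"
  shows "bh \<alpha> p0 (\<lambda>x. c * f x) \<and> holder_norm \<alpha> p0 (\<lambda>x. c * f x) \<le> \<bar>c\<bar> * holder_norm \<alpha> p0 f"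
proof -
  have "bh \<alpha> p0 (\<lambda>x. c * f x) \<and> holder_norm \<alpha> p0 (\<lambda>x. c * f x) \<le> \<bar>c\<bar> * supn p0 f + \<bar>c\<bar> * semin \<alpha> p0 f"
  proof (rule norm_le[OF p0])
    fix x assume "x \<in> omega_bar p0"
    then show "\<bar>c * f x\<bar> \<le> \<bar>c\<bar> * supn p0 f"
      using supn_le[OF f] by (simp add: abs_mult mult_left_mono)
  next
    fix x y assume xy: "x \<in> omega_bar p0" "y \<in> omega_bar p0" "distO x y \<noteq> 0"
    have "\<bar>c * f x - c * f y\<bar> / distO x y powr \<alpha> = \<bar>c\<bar> * (\<bar>f x - f y\<bar> / distO x y powr \<alpha>)"
      by (simp add: abs_mult right_diff_distrib[symmetric])
    also have "\<dots> \<le> \<bar>c\<bar> * semin \<alpha> p0 f" using semin_le[OF f xy] by (rule mult_left_mono) simp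
    finally show "\<bar>c * f x - c * f y\<bar> / distO x y powr \<alpha> \<le> \<bar>c\<bar> * semin \<alpha> p0 f" .
  qed
  then show ?thesis unfolding holder_norm_split by (simp add: distrib_left)
qed

lemma norm_mult:
  assumes p0: "p0 < 0" and f: "bh \<alpha> p0 f" and g: "bh \<alpha> p0 g"
  shows "bh \<alpha> p0 (\<lambda>x. f x * g x) \<and> holder_norm \<alpha> p0 (\<lambda>x. f x * g x) \<le> holder_norm \<alpha> p0 f * holder_norm \<alpha> p0 g"
proof -
  have sf: "0 \<le> supn p0 f" and sg: "0 \<le> supn p0 g" using supn_nonneg p0 f g by auto
  have qf: "0 \<le> semin \<alpha> p0 f" and qg: "0 \<le> semin \<alpha> p0 g" using semin_nonneg p0 f g by auto
  have "bh \<alpha> p0 (\<lambda>x. f x * g x) \<and> holder_norm \<alpha> p0 (\<lambda>x. f x * g x) \<le> supn p0 f * supn p0 g + (supn p0 f * semin \<alpha> p0 g + supn p0 g * semin \<alpha> p0 f)"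
  proof (rule norm_le[OF p0])
    fix x assume "x \<in> omega_bar p0"
    then show "\<bar>f x * g x\<bar> \<le> supn p0 f * supn p0 g"
      using supn_le[OF f] supn_le[OF g] by (simp add: abs_mult) (intro mult_mono, auto simp: sf sg)
  next
    fix x y assume xy: "x \<in> omega_bar p0" "y \<in> omega_bar p0" "distO x y \<noteq> 0"
    define D where "D = distO x y powr \<alpha>"
    have D: "D > 0" using pos_D[OF xy(3)] unfolding D_def .
    have "\<bar>f x * g x - f y * g y\<bar> = \<bar>f x * (g x - g y) + g y * (f x - f y)\<bar>" by (simp add: algebra_simps)
    also have "\<dots> \<le> \<bar>f x\<bar> * \<bar>g x - g y\<bar> + \<bar>g y\<bar> * \<bar>f x - f y\<bar>" by (simp add: abs_mult abs_triangle_ineq[THEN order_trans])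
    finally have "\<bar>f x * g x - f y * g y\<bar> / D \<le> (\<bar>f x\<bar> * \<bar>g x - g y\<bar> + \<bar>g y\<bar> * \<bar>f x - f y\<bar>) / D"
      using D by (intro divide_right_mono) auto
    also have "\<dots> = \<bar>f x\<bar> * (\<bar>g x - g y\<bar> / D) + \<bar>g y\<bar> * (\<bar>f x - f y\<bar> / D)" by (simp add: add_divide_distrib)
    also have "\<dots> \<le> supn p0 f * semin \<alpha> p0 g + supn p0 g * semin \<alpha> p0 f"
      using semin_le[OF f xy] semin_le[OF g xy] supn_le[OF f xy(1)] supn_le[OF g xy(2)] D
      unfolding D_def[symmetric]
      by (intro add_mono mult_mono) auto
    finally show "\<bar>f x * g x - f y * g y\<bar> / distO x y powr \<alpha> \<le> supn p0 f * semin \<alpha> p0 g + supn p0 g * semin \<alpha> p0 f"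
      unfolding D_def .
  qed
  moreover have "supn p0 f * supn p0 g + (supn p0 f * semin \<alpha> p0 g + supn p0 g * semin \<alpha> p0 f) \<le> holder_norm \<alpha> p0 f * holder_norm \<alpha> p0 g"
    unfolding holder_norm_split using qf qg by (simp add: algebra_simps)
  ultimately show ?thesis by linarith
qed

lemma norm_sum:
  assumes p0: "p0 < 0" and fin: "finite I" and h: "\<And>i. i \<in> I \<Longrightarrow> bh \<alpha> p0 (h i)"
  shows "bh \<alpha> p0 (\<lambda>x. \<Sum>i\<in>I. h i x) \<and> holder_norm \<alpha> p0 (\<lambda>x. \<Sum>i\<in>I. h i x) \<le> (\<Sum>i\<in>I. holder_norm \<alpha> p0 (h i))"
  using fin h
proof (induction I rule: finite_induct)
  case empty
  have "bh \<alpha> p0 (\<lambda>x. 0::real) \<and> holder_norm \<alpha> p0 (\<lambda>x. 0::real) \<le> 0 + 0"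
    by (rule norm_le[OF p0]) auto
  then show ?case by simp
next
  case (insert a F)
  have IH: "bh \<alpha> p0 (\<lambda>x. \<Sum>i\<in>F. h i x) \<and> holder_norm \<alpha> p0 (\<lambda>x. \<Sum>i\<in>F. h i x) \<le> (\<Sum>i\<in>F. holder_norm \<alpha> p0 (h i))"
    using insert by auto
  have ha: "bh \<alpha> p0 (h a)" using insert by auto
  have "bh \<alpha> p0 (\<lambda>x. h a x + (\<Sum>i\<in>F. h i x)) \<and> holder_norm \<alpha> p0 (\<lambda>x. h a x + (\<Sum>i\<in>F. h i x)) \<le> holder_norm \<alpha> p0 (h a) + holder_norm \<alpha> p0 (\<lambda>x. \<Sum>i\<in>F. h i x)"
    using norm_add[OF p0 ha, of "\<lambda>x. \<Sum>i\<in>F. h i x"] IH by simp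
  then show ?case using IH insert by simp
qed

definition wt :: "nat \<Rightarrow> (nat \<Rightarrow> real) \<Rightarrow> nat \<Rightarrow> real" where
  "wt d E k = (if k < d then 1 else E k * fact (k - d))"
definition phi :: "nat \<Rightarrow> nat \<Rightarrow> real" where
  "phi d k = (if k < d then 1 else fact (k - d))"

definition good where
  "good \<alpha> p0 N d E K f \<longleftrightarrow> q_diff N p0 f \<and>
     (\<forall>k\<le>N. bh \<alpha> p0 (dq k f) \<and> holder_norm \<alpha> p0 (dq k f) \<le> K * wt d E k)"

definition Econd where
  "Econd d E \<longleftrightarrow> (\<forall>k\<ge>d. E k \<ge> 1) \<and> (\<forall>j k. d \<le> j \<longrightarrow> j \<le> k \<longrightarrow> E j \<le> E k)
     \<and> (\<forall>j k. d \<le> j \<longrightarrow> d \<le> k \<longrightarrow> E j * E k \<le> E (j+k))"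

lemma phi_pos: "phi d k > 0" unfolding phi_def by simp

lemma wt_nonneg: assumes "Econd d E" shows "wt d E k \<ge> 0"
proof (cases "k < d")
  case False
  then have "E k \<ge> 1" using assms unfolding Econd_def by auto
  then show ?thesis using False unfolding wt_def by simp
qed (simp add: wt_def)

lemma wt_eq: "wt d E n = phi d n * (if n < d then 1 else E n)"
  unfolding wt_def phi_def by simp

lemma wt_prod:
  assumes E: "Econd d E" and k: "k \<le> n"
  shows "wt d E k * wt d E (n-k) \<le> phi d k * phi d (n-k) * (if n < d then 1 else E n)"
proof -
  have E1: "\<And>k. k \<ge> d \<Longrightarrow> E k \<ge> 1" and Em: "\<And>j k. d \<le> j \<Longrightarrow> j \<le> k \<Longrightarrow> E j \<le> E k"
    and Ex: "\<And>j k. d \<le> j \<Longrightarrow> d \<le> k \<Longrightarrow> E j * E k \<le> E (j+k)"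
    using E unfolding Econd_def by auto
  have fp: "\<And>m. (fact m :: real) > 0" by simp
  show ?thesis
  proof (cases "n < d")
    case True then show ?thesis using k unfolding wt_def phi_def by simp
  next
    case nd: False
    show ?thesis
    proof (cases "k < d")
      case kd: True
      show ?thesis
      proof (cases "n - k < d")
        case True then show ?thesis using kd nd E1[of n] unfolding wt_def phi_def by simp
      next
        case False
        have "E (n-k) \<le> E n" using Em[of "n-k" n] False by simp
        then show ?thesis using kd nd False unfolding wt_def phi_def
          by (simp add: mult.commute mult_left_mono)
      qed
    next
      case kd: False
      show ?thesis
      proof (cases "n - k < d")
        case True
        have "E k \<le> E n" using Em[of k n] kd k by simp
        then show ?thesis using kd nd True unfolding wt_def phi_def
          by (simp add: mult.commute mult_left_mono)
      next
        case False
        have "E k * E (n-k) \<le> E n" using Ex[of k "n-k"] kd False k by simp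
        then have "E k * fact (k - d) * (E (n - k) * fact (n - k - d)) \<le> fact (k - d) * fact (n - k - d) * E n"
          using fp[of "k-d"] fp[of "n-k-d"]
          by (simp add: algebra_simps mult_left_mono)
        then show ?thesis using kd nd False unfolding wt_def phi_def by simp
      qed
    qed
  qed
qed

lemma good_mult:
  assumes p0: "p0 < 0" and E: "Econd d E"
    and comb: "\<And>n. (\<Sum>k=0..n. real (n choose k) * phi d k * phi d (n-k)) \<le> c * phi d n"
    and f: "good \<alpha> p0 N d E Kf f" and g: "good \<alpha> p0 N d E Kg g"
    and Kf: "Kf \<ge> 0" and Kg: "Kg \<ge> 0"
  shows "good \<alpha> p0 N d E (c * Kf * Kg) (\<lambda>x. f x * g x)"
proof -
  have qf: "q_diff N p0 f" and qg: "q_diff N p0 g" using f g unfolding good_def by auto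
  have Fd: "\<And>p. p \<in> {p0..0} \<Longrightarrow> \<forall>m<N. \<forall>q. ((deriv^^m) (\<lambda>t. f (t,p)) has_real_derivative (deriv^^Suc m) (\<lambda>t. f (t,p)) q) (at q)"
    using qf unfolding q_diff_def by blast
  have Gd: "\<And>p. p \<in> {p0..0} \<Longrightarrow> \<forall>m<N. \<forall>q. ((deriv^^m) (\<lambda>t. g (t,p)) has_real_derivative (deriv^^Suc m) (\<lambda>t. g (t,p)) q) (at q)"
    using qg unfolding q_diff_def by blast
  have q: "q_diff N p0 (\<lambda>x. f x * g x)"
    unfolding q_diff_def using leib_qdiff[OF Fd Gd] by simp
  have main: "bh \<alpha> p0 (dq k (\<lambda>x. f x * g x)) \<and> holder_norm \<alpha> p0 (dq k (\<lambda>x. f x * g x)) \<le> c * Kf * Kg * wt d E k"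
    if k: "k \<le> N" for k
  proof -
    define T where "T = (\<lambda>i x. real (k choose i) * (dq i f x * dq (k-i) g x))"
    have eq: "dq k (\<lambda>x. f x * g x) x = (\<Sum>i=0..k. T i x)" if x: "x \<in> omega_bar p0" for x
    proof -
      obtain q p where xp: "x = (q,p)" by fastforce
      have p: "p \<in> {p0..0}" using x xp unfolding omega_bar_def by auto
      show ?thesis unfolding xp dq_def T_def using leib_formula[OF Fd[OF p] Gd[OF p] k]
        by (simp add: mult.assoc)
    qed
    have bf: "\<And>i. i \<le> N \<Longrightarrow> bh \<alpha> p0 (dq i f) \<and> holder_norm \<alpha> p0 (dq i f) \<le> Kf * wt d E i"
      using f unfolding good_def by auto
    have bg: "\<And>i. i \<le> N \<Longrightarrow> bh \<alpha> p0 (dq i g) \<and> holder_norm \<alpha> p0 (dq i g) \<le> Kg * wt d E i"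
      using g unfolding good_def by auto
    have Ti: "bh \<alpha> p0 (T i) \<and> holder_norm \<alpha> p0 (T i) \<le> real (k choose i) * (Kf * wt d E i * (Kg * wt d E (k-i)))"
      if i: "i \<in> {0..k}" for i
    proof -
      have i1: "i \<le> N" "k - i \<le> N" using i k by auto
      have m: "bh \<alpha> p0 (\<lambda>x. dq i f x * dq (k-i) g x) \<and> holder_norm \<alpha> p0 (\<lambda>x. dq i f x * dq (k-i) g x)
         \<le> holder_norm \<alpha> p0 (dq i f) * holder_norm \<alpha> p0 (dq (k-i) g)"
        using norm_mult[OF p0, of \<alpha> "dq i f" "dq (k-i) g"] bf[OF i1(1)] bg[OF i1(2)] by blast
      have "holder_norm \<alpha> p0 (dq i f) * holder_norm \<alpha> p0 (dq (k-i) g) \<le> Kf * wt d E i * (Kg * wt d E (k-i))"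
        using bf[OF i1(1)] bg[OF i1(2)] norm_nonneg[OF p0, of \<alpha> "dq i f"] norm_nonneg[OF p0, of \<alpha> "dq (k-i) g"]
        by (intro mult_mono) auto
      then have m2: "holder_norm \<alpha> p0 (\<lambda>x. dq i f x * dq (k-i) g x) \<le> Kf * wt d E i * (Kg * wt d E (k-i))"
        using m by linarith
      have s: "bh \<alpha> p0 (T i) \<and> holder_norm \<alpha> p0 (T i) \<le> \<bar>real (k choose i)\<bar> * holder_norm \<alpha> p0 (\<lambda>x. dq i f x * dq (k-i) g x)"
        unfolding T_def using norm_scale[OF p0] m by blast
      have "\<bar>real (k choose i)\<bar> * holder_norm \<alpha> p0 (\<lambda>x. dq i f x * dq (k-i) g x) \<le> real (k choose i) * (Kf * wt d E i * (Kg * wt d E (k-i)))"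
        using m2 by (simp add: mult_left_mono)
      then show ?thesis using s by linarith
    qed
    have S: "bh \<alpha> p0 (\<lambda>x. \<Sum>i=0..k. T i x) \<and> holder_norm \<alpha> p0 (\<lambda>x. \<Sum>i=0..k. T i x) \<le> (\<Sum>i=0..k. holder_norm \<alpha> p0 (T i))"
      using norm_sum[OF p0, of "{0..k}" \<alpha> T] Ti by blast
    have "(\<Sum>i=0..k. holder_norm \<alpha> p0 (T i)) \<le> (\<Sum>i=0..k. real (k choose i) * (Kf * wt d E i * (Kg * wt d E (k-i))))"
      using Ti by (intro sum_mono) auto
    also have "\<dots> = Kf * Kg * (\<Sum>i=0..k. real (k choose i) * (wt d E i * wt d E (k-i)))"
      by (simp add: sum_distrib_left algebra_simps)
    also have "\<dots> \<le> Kf * Kg * (\<Sum>i=0..k. real (k choose i) * (phi d i * phi d (k-i) * (if k < d then 1 else E k)))"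
      using wt_prod[OF E] Kf Kg by (intro mult_left_mono sum_mono) auto
    also have "\<dots> = Kf * Kg * (if k < d then 1 else E k) * (\<Sum>i=0..k. real (k choose i) * phi d i * phi d (k-i))"
      by (simp add: sum_distrib_left algebra_simps)
    also have "\<dots> \<le> Kf * Kg * (if k < d then 1 else E k) * (c * phi d k)"
    proof (rule mult_left_mono[OF comb[of k]])
      have "k \<ge> d \<Longrightarrow> E k \<ge> 1" using E unfolding Econd_def by auto
      then show "0 \<le> Kf * Kg * (if k < d then 1 else E k)" using Kf Kg by auto
    qed
    also have "\<dots> = c * Kf * Kg * wt d E k" unfolding wt_eq by simp
    finally have "(\<Sum>i=0..k. holder_norm \<alpha> p0 (T i)) \<le> c * Kf * Kg * wt d E k" .
    moreover have "bh \<alpha> p0 (dq k (\<lambda>x. f x * g x)) = bh \<alpha> p0 (\<lambda>x. \<Sum>i=0..k. T i x)"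
      "holder_norm \<alpha> p0 (dq k (\<lambda>x. f x * g x)) = holder_norm \<alpha> p0 (\<lambda>x. \<Sum>i=0..k. T i x)"
      using norm_cong[of p0 "dq k (\<lambda>x. f x * g x)" "\<lambda>x. \<Sum>i=0..k. T i x"] eq by auto
    ultimately show ?thesis using S by linarith
  qed
  show ?thesis unfolding good_def using q main by blast
qed

definition hh :: "nat \<Rightarrow> real" where "hh j = 1 / ((real j + 1) * (real j + 2))"

lemma fact_p2: "(fact (m+2)::real) = (real m + 2)*(real m+1)*fact m"
proof -
  have "m + 2 = Suc (Suc m)" by simp
  then have "(fact (m+2)::real) = fact (Suc (Suc m))" by (rule arg_cong)
  also have "\<dots> = real (Suc (Suc m)) * (real (Suc m) * fact m)" by (simp only: fact_Suc of_nat_Suc)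
  finally show ?thesis by (simp add: algebra_simps)
qed

lemma fact_p3: "(fact (m+3)::real) = (real m + 3)*(real m + 2)*(real m+1)*fact m"
proof -
  have "m + 3 = Suc (Suc (Suc m))" by simp
  then have "(fact (m+3)::real) = fact (Suc (Suc (Suc m)))" by (rule arg_cong)
  also have "\<dots> = real (Suc (Suc (Suc m))) * (real (Suc (Suc m)) * (real (Suc m) * fact m))" by (simp only: fact_Suc of_nat_Suc)
  finally show ?thesis by (simp add: algebra_simps)
qed

lemma mid2: assumes ab: "a \<le> b"
  shows "real ((a+b+4) choose (a+2)) * fact a * fact b \<le> 300 * fact (a+b+2) * hh (a+2)"
proof -
  have C: "real ((a+b+4) choose (a+2)) = fact (a+b+4) / (fact (a+2) * fact (b+2))"
    using binomial_fact[of "a+2" "a+b+4", where 'a=real] by simp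
  have f1: "(fact (a+b+4)::real) = (real a+real b+4)*(real a+real b+3)*fact(a+b+2)"
  proof -
    have "a+b+4 = (a+b+2)+2" by simp
    then have "(fact (a+b+4)::real) = fact ((a+b+2)+2)" by (rule arg_cong)
    also have "\<dots> = (real (a+b+2) + 2)*(real (a+b+2)+1)*fact (a+b+2)" by (rule fact_p2)
    finally show ?thesis by (simp add: algebra_simps)
  qed
  define N where "N = (real a+real b+4)*(real a+real b+3)"
  define P where "P = (real a+2)*(real a+1)"
  define Q where "Q = (real b+2)*(real b+1)"
  define X where "X = (real a+3)*(real a+4)"
  define F where "F = (fact (a+b+2)::real)"
  have Pp: "P > 0" "Q > 0" "X > 0" "F > 0" unfolding P_def Q_def X_def F_def by auto
  have f2: "(fact (a+2)::real) = P * fact a" unfolding P_def by (rule fact_p2)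
  have f3: "(fact (b+2)::real) = Q * fact b" unfolding Q_def by (rule fact_p2)
  have f4: "(fact (a+b+4)::real) = N * F" unfolding N_def F_def f1 ..
  have fa: "(fact a::real) > 0" "(fact b::real) > 0" by auto
  have e: "real ((a+b+4) choose (a+2)) * fact a * fact b = N * F / (P * Q)"
    unfolding C f2 f3 f4 using fa Pp by (simp add: field_simps)
  have "N \<le> (2*(real b+2)) * (4*(real b+1))" unfolding N_def using ab
    by (intro mult_mono) auto
  then have NQ: "N \<le> 8 * Q" unfolding Q_def by (simp add: algebra_simps)
  have "X \<le> (3*(real a+1)) * (2*(real a+2))" unfolding X_def
    by (intro mult_mono) auto
  then have XP: "X \<le> 6 * P" unfolding P_def by (simp add: algebra_simps)
  have "N * X \<le> (8*Q) * (6*P)" using NQ XP Pp by (intro mult_mono) (auto simp: N_def)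
  then have "N * X \<le> 48 * (P * Q)" by (simp add: algebra_simps)
  moreover have "0 < P * Q" using Pp by simp
  ultimately have "N * X \<le> 300 * (P * Q)" by linarith
  then have key: "N * X * F \<le> 300 * P * Q * F" using Pp by (intro mult_right_mono) (auto simp: algebra_simps)
  have "N * F / (P * Q) \<le> 300 * F * (1 / X)"
    using key Pp by (simp add: divide_simps algebra_simps)
  then show ?thesis unfolding e hh_def X_def F_def by (simp add: algebra_simps)
qed

lemma mid3: assumes ab: "a \<le> b"
  shows "real ((a+b+6) choose (a+3)) * fact a * fact b \<le> 300 * fact (a+b+3) * hh (a+3)"
proof -
  have C0: "real ((a+b+6) choose (a+3)) = fact (a+b+6) / (fact (a+3) * fact (a+b+6-(a+3)))"
    by (rule binomial_fact) simp
  have "a+b+6-(a+3) = b+3" by simp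
  note C = C0[unfolded this]
  have f1: "(fact (a+b+6)::real) = (real a+real b+6)*(real a+real b+5)*(real a+real b+4)*fact(a+b+3)"
  proof -
    have "a+b+6 = (a+b+3)+3" by simp
    then have "(fact (a+b+6)::real) = fact ((a+b+3)+3)" by (rule arg_cong)
    also have "\<dots> = (real (a+b+3) + 3)*(real (a+b+3)+2)*(real (a+b+3)+1)*fact (a+b+3)" by (rule fact_p3)
    finally show ?thesis by (simp add: algebra_simps)
  qed
  define N where "N = (real a+real b+6)*(real a+real b+5)*(real a+real b+4)"
  define P where "P = (real a+3)*(real a+2)*(real a+1)"
  define Q where "Q = (real b+3)*(real b+2)*(real b+1)"
  define X where "X = (real a+3+1)*(real a+3+2)"
  define F where "F = (fact (a+b+3)::real)"
  have Pp: "P > 0" "Q > 0" "X > 0" "F > 0" unfolding P_def Q_def X_def F_def by auto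
  have f2: "(fact (a+3)::real) = P * fact a" unfolding P_def by (rule fact_p3)
  have f3: "(fact (b+3)::real) = Q * fact b" unfolding Q_def by (rule fact_p3)
  have f4: "(fact (a+b+6)::real) = N * F" unfolding N_def F_def f1 ..
  have fa: "(fact a::real) > 0" "(fact b::real) > 0" by auto
  have e: "real ((a+b+6) choose (a+3)) * fact a * fact b = N * F / (P * Q)"
    unfolding C f2 f3 f4 using fa Pp by (simp add: field_simps)
  have "N \<le> (2*(real b+3)) * (3*(real b+2)) * (4*(real b+1))" unfolding N_def using ab
    by (intro mult_mono) auto
  then have NQ: "N \<le> 24 * Q" unfolding Q_def by (simp add: algebra_simps)
  have "X \<le> (4*(real a+1)) * (3*(real a+2))" unfolding X_def
    by (intro mult_mono) auto
  also have "\<dots> \<le> (4*(real a+1)) * (3*(real a+2)) * (real a + 3)"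
    using mult_left_mono[of 1 "real a + 3" "4*(real a+1)*(3*(real a+2))"] by simp
  finally have XP: "X \<le> 12 * P" unfolding P_def by (simp add: algebra_simps)
  have "N * X \<le> (24*Q) * (12*P)" using NQ XP Pp by (intro mult_mono) (auto simp: N_def)
  then have "N * X \<le> 288 * (P * Q)" by (simp add: algebra_simps)
  moreover have "0 < P * Q" using Pp by simp
  ultimately have "N * X \<le> 300 * (P * Q)" by linarith
  then have key: "N * X * F \<le> 300 * P * Q * F" using Pp by (intro mult_right_mono) (auto simp: algebra_simps)
  have "N * F / (P * Q) \<le> 300 * F * (1 / X)"
    using key Pp by (simp add: divide_simps algebra_simps)
  then show ?thesis unfolding e hh_def X_def F_def by (simp add: algebra_simps)
qed

lemma hh_nonneg: "hh j \<ge> 0" unfolding hh_def by simp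

lemma hh_tel: "hh k = 1/(real k + 1) - 1/(real (Suc k) + 1)"
  unfolding hh_def by (simp add: divide_simps)

lemma hh_sum_le: "(\<Sum>k=0..n. hh k) \<le> 1"
proof -
  have "(\<Sum>k=0..n. hh k) = - (\<Sum>k=0..n. (\<lambda>k. 1/(real k + 1)) (Suc k) - (\<lambda>k. 1/(real k + 1)) k)"
    unfolding hh_tel by (simp add: sum_negf[symmetric])
  also have "\<dots> = 1 - 1/(real (Suc n) + 1)" by (subst sum_Suc_diff) auto
  finally show ?thesis by simp
qed

lemma choose2: "2 * real (Suc n choose 2) = real (Suc n) * real n"
proof -
  have "Suc n * (n choose 1) = (Suc n choose Suc 1) * Suc 1" by (rule Suc_times_binomial_eq)
  then have "(Suc n choose 2) * 2 = Suc n * n" by (simp add: numeral_2_eq_2)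
  then have "real ((Suc n choose 2) * 2) = real (Suc n * n)" by (rule arg_cong)
  then show ?thesis by (simp add: algebra_simps)
qed

lemma term2: assumes n: "2 \<le> n" and k: "2*k \<le> n"
  shows "real (n choose k) * phi 2 k * phi 2 (n-k) \<le> 300 * phi 2 n * (hh k + hh (n-k))"
proof -
  have pn: "phi 2 n > 0" unfolding phi_def by simp
  consider "k = 0" | "k = 1" | "k \<ge> 2" by linarith
  then show ?thesis
  proof cases
    case 1
    have "phi 2 n \<le> 300 * phi 2 n * (1/2)" using pn by simp
    also have "\<dots> \<le> 300 * phi 2 n * (hh 0 + hh n)" using pn hh_nonneg[of n] by (simp add: hh_def)
    finally show ?thesis using 1 by (simp add: phi_def)
  next
    case 2
    show ?thesis
    proof (cases "n = 2")
      case True then show ?thesis using 2 by (simp add: phi_def hh_def)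
    next
      case False
      define m where "m = n - 3"
      have m: "n = m + 3" using n False unfolding m_def by linarith
      have "phi 2 (n-1) = fact m" "phi 2 n = fact (m+1)" unfolding phi_def m by auto
      then have E1: "real (n choose k) * phi 2 k * phi 2 (n-k) = (real m + 3) * fact m"
        and E2: "phi 2 n = (real m + 1) * fact m" using 2 m by (auto simp: phi_def)
      have "(real m + 3) * fact m \<le> (50 * (real m + 1)) * fact m"
        by (intro mult_right_mono) auto
      then have "(real m + 3) * fact m \<le> 300 * ((real m + 1) * fact m) * (1/6)" by simp
      moreover have "300 * ((real m + 1) * fact m) * (1/6) \<le> 300 * ((real m + 1) * fact m) * (hh k + hh (n-k))"
        using 2 hh_nonneg[of "n-k"] by (intro mult_left_mono) (auto simp: hh_def)
      ultimately show ?thesis unfolding E1 E2 by linarith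
    qed
  next
    case 3
    define a where "a = k - 2"
    define b where "b = n - k - 2"
    have a: "k = a + 2" using 3 unfolding a_def by linarith
    have b: "n - k = b + 2" using 3 k unfolding b_def by linarith
    have ab: "a \<le> b" using a b k by linarith
    have nn: "n = a + b + 4" using a b k by linarith
    have "real (n choose k) * phi 2 k * phi 2 (n-k) = real ((a+b+4) choose (a+2)) * fact a * fact b"
      unfolding phi_def using a b nn by simp
    also have "\<dots> \<le> 300 * fact (a+b+2) * hh (a+2)" by (rule mid2[OF ab])
    also have "\<dots> \<le> 300 * phi 2 n * (hh k + hh (n-k))"
      unfolding phi_def using nn a hh_nonneg[of "n-k"] by (simp add: mult_left_mono)
    finally show ?thesis .
  qed
qed

lemma term3: assumes n: "3 \<le> n" and k: "2*k \<le> n"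
  shows "real (n choose k) * phi 3 k * phi 3 (n-k) \<le> 300 * phi 3 n * (hh k + hh (n-k))"
proof -
  have pn: "phi 3 n > 0" unfolding phi_def by simp
  consider "k = 0" | "k = 1" | "k = 2" | "k \<ge> 3" by linarith
  then show ?thesis
  proof cases
    case 1
    have "phi 3 n \<le> 300 * phi 3 n * (1/2)" using pn by simp
    also have "\<dots> \<le> 300 * phi 3 n * (hh 0 + hh n)" using pn hh_nonneg[of n] by (simp add: hh_def)
    finally show ?thesis using 1 by (simp add: phi_def)
  next
    case 2
    show ?thesis
    proof (cases "n = 3")
      case True then show ?thesis using 2 by (simp add: phi_def hh_def)
    next
      case False
      define m where "m = n - 4"
      have m: "n = m + 4" using n False unfolding m_def by linarith
      have "phi 3 (n-1) = fact m" "phi 3 n = fact (m+1)" unfolding phi_def m by auto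
      then have E1: "real (n choose k) * phi 3 k * phi 3 (n-k) = (real m + 4) * fact m"
        and E2: "phi 3 n = (real m + 1) * fact m" using 2 m by (auto simp: phi_def)
      have "(real m + 4) * fact m \<le> (50 * (real m + 1)) * fact m"
        by (intro mult_right_mono) auto
      then have "(real m + 4) * fact m \<le> 300 * ((real m + 1) * fact m) * (1/6)" by simp
      moreover have "300 * ((real m + 1) * fact m) * (1/6) \<le> 300 * ((real m + 1) * fact m) * (hh k + hh (n-k))"
        using 2 hh_nonneg[of "n-k"] by (intro mult_left_mono) (auto simp: hh_def)
      ultimately show ?thesis unfolding E1 E2 by linarith
    qed
  next
    case 3
    show ?thesis
    proof (cases "n = 4")
      case True
      have "real (4 choose 2) = (6::real)" by (simp add: numeral_eq_Suc)
      then show ?thesis using 3 True by (simp add: phi_def hh_def)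
    next
      case False
      define m where "m = n - 5"
      have m: "n = m + 5" using k 3 False unfolding m_def by linarith
      have c2: "2 * real (n choose k) = (real m + 5) * (real m + 4)"
        using choose2[of "m+4"] 3 m by (simp add: algebra_simps)
      have "phi 3 (n-2) = fact m" "phi 3 n = fact (m+2)" unfolding phi_def m by auto
      then have E1: "real (n choose k) * phi 3 k * phi 3 (n-k) = ((real m + 5) * (real m + 4) / 2) * fact m"
        and E2: "phi 3 n = ((real m + 2) * (real m + 1)) * fact m" using 3 m c2 by (auto simp: phi_def fact_p2 algebra_simps)
      have h1: "(real m + 5) * (real m + 4) = real m * real m + 9 * real m + 20" by (simp add: algebra_simps)
      have h2: "(real m + 2) * (real m + 1) = real m * real m + 3 * real m + 2" by (simp add: algebra_simps)
      have "0 \<le> real m * real m" "0 \<le> real m" by simp_all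
      then have "(real m + 5) * (real m + 4) / 2 \<le> 25 * ((real m + 2) * (real m + 1))"
        unfolding h1 h2 by (simp add: distrib_left)
      then have "((real m + 5) * (real m + 4) / 2) * fact m \<le> (25 * ((real m + 2) * (real m + 1))) * fact m"
        by (rule mult_right_mono) simp
      then have "((real m + 5) * (real m + 4) / 2) * fact m \<le> 300 * (((real m + 2) * (real m + 1)) * fact m) * (1/12)" by (simp add: algebra_simps)
      moreover have "300 * (((real m + 2) * (real m + 1)) * fact m) * (1/12) \<le> 300 * (((real m + 2) * (real m + 1)) * fact m) * (hh k + hh (n-k))"
        using 3 hh_nonneg[of "n-k"] by (intro mult_left_mono) (auto simp: hh_def)
      ultimately show ?thesis unfolding E1 E2 by linarith
    qed
  next
    case 4
    define a where "a = k - 3"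
    define b where "b = n - k - 3"
    have a: "k = a + 3" using 4 unfolding a_def by linarith
    have b: "n - k = b + 3" using 4 k unfolding b_def by linarith
    have ab: "a \<le> b" using a b k by linarith
    have nn: "n = a + b + 6" using a b k by linarith
    have "real (n choose k) * phi 3 k * phi 3 (n-k) = real ((a+b+6) choose (a+3)) * fact a * fact b"
      unfolding phi_def using a b nn by simp
    also have "\<dots> \<le> 300 * fact (a+b+3) * hh (a+3)" by (rule mid3[OF ab])
    also have "\<dots> \<le> 300 * phi 3 n * (hh k + hh (n-k))"
      unfolding phi_def using nn a hh_nonneg[of "n-k"] by (simp add: mult_left_mono add_ac)
    finally show ?thesis .
  qed
qed

lemma comb_gen:
  assumes T: "\<And>n k. d \<le> n \<Longrightarrow> 2*k \<le> n \<Longrightarrow> real (n choose k) * phi d k * phi d (n-k) \<le> c0 * phi d n * (hh k + hh (n-k))"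
    and c: "2*c0 \<le> c" "2^d \<le> c" "c0 \<ge> 0"
  shows "(\<Sum>k=0..n. real (n choose k) * phi d k * phi d (n-k)) \<le> c * phi d n"
proof (cases "n < d")
  case True
  have "(\<Sum>k=0..n. real (n choose k) * phi d k * phi d (n-k)) = (\<Sum>k=0..n. real (n choose k))"
    using True by (intro sum.cong) (auto simp: phi_def)
  also have "\<dots> = 2^n" using choose_row_sum[of n] by (simp add: atLeast0AtMost flip: of_nat_sum)
  also have "\<dots> \<le> 2^d" using True by simp
  finally show ?thesis using True c by (simp add: phi_def)
next
  case False
  then have dn: "d \<le> n" by simp
  have T': "real (n choose k) * phi d k * phi d (n-k) \<le> c0 * phi d n * (hh k + hh (n-k))" if k: "k \<le> n" for k
  proof (cases "2*k \<le> n")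
    case True then show ?thesis using T[OF dn] by blast
  next
    case False
    have "real (n choose (n-k)) * phi d (n-k) * phi d (n-(n-k)) \<le> c0 * phi d n * (hh (n-k) + hh (n-(n-k)))"
      using T[OF dn, of "n-k"] False by simp
    then show ?thesis using k by (simp add: binomial_symmetric[OF k, symmetric] algebra_simps)
  qed
  have "(\<Sum>k=0..n. real (n choose k) * phi d k * phi d (n-k)) \<le> (\<Sum>k=0..n. c0 * phi d n * (hh k + hh (n-k)))"
    using T' by (intro sum_mono) auto
  also have "\<dots> = c0 * phi d n * ((\<Sum>k=0..n. hh k) + (\<Sum>k=0..n. hh (n-k)))"
    by (simp add: sum_distrib_left[symmetric] sum.distrib)
  also have "(\<Sum>k=0..n. hh (n-k)) = (\<Sum>k=0..n. hh k)"
    using sum.atLeastAtMost_rev[of hh 0 n] by simp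
  also have "c0 * phi d n * ((\<Sum>k=0..n. hh k) + (\<Sum>k=0..n. hh k)) \<le> c0 * phi d n * (1 + 1)"
    using hh_sum_le[of n] c(3) by (intro mult_left_mono add_mono) (auto simp: phi_def)
  also have "\<dots> = (2 * c0) * phi d n" by simp
  also have "\<dots> \<le> c * phi d n" using c by (intro mult_right_mono) (auto simp: phi_def)
  finally show ?thesis .
qed

lemma comb2: "(\<Sum>k=0..n. real (n choose k) * phi 2 k * phi 2 (n-k)) \<le> 600 * phi 2 n"
  by (rule comb_gen[of 2 300]) (auto intro: term2)

lemma comb3: "(\<Sum>k=0..n. real (n choose k) * phi 3 k * phi 3 (n-k)) \<le> 600 * phi 3 n"
  by (rule comb_gen[of 3 300]) (auto intro: term3)


lemma single_good:
  assumes p0: "p0 < 0" and adm: "admissible \<alpha> p0 N f" and E: "Econd d E"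
    and hi: "\<And>k. d \<le> k \<Longrightarrow> k \<le> N \<Longrightarrow> holder_norm \<alpha> p0 (dq k f) \<le> E k * fact (k - d)"
    and lo: "\<And>k. k < d \<Longrightarrow> k \<le> N \<Longrightarrow> holder_norm \<alpha> p0 (dq k f) \<le> S"
    and S: "S \<ge> 1"
  shows "good \<alpha> p0 N d E S f"
  unfolding good_def
proof (intro conjI allI impI)
  show "q_diff N p0 f" using adm unfolding admissible_def by simp
  fix k assume k: "k \<le> N"
  show "bh \<alpha> p0 (dq k f)" using adm k unfolding admissible_def by (auto intro: in_holder_bh)
  show "holder_norm \<alpha> p0 (dq k f) \<le> S * wt d E k"
  proof (cases "k < d")
    case True then show ?thesis using lo[OF True k] by (simp add: wt_def)
  next
    case False
    have "holder_norm \<alpha> p0 (dq k f) \<le> wt d E k" using hi[of k] False k by (simp add: wt_def)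
    also have "\<dots> \<le> S * wt d E k" using S wt_nonneg[OF E, of k] by (simp add: mult_le_cancel_right1)
    finally show ?thesis .
  qed
qed

lemma S_bound:
  assumes p0: "p0 < 0" and fin: "finite I" and bh: "\<And>i l. i \<in> I \<Longrightarrow> l \<le> m \<Longrightarrow> bh \<alpha> p0 (dq l (u i))"
  shows "1 \<le> 1 + (\<Sum>i\<in>I. \<Sum>l\<le>m. holder_norm \<alpha> p0 (dq l (u i)))"
    and "\<And>i l. i \<in> I \<Longrightarrow> l \<le> m \<Longrightarrow> holder_norm \<alpha> p0 (dq l (u i)) \<le> 1 + (\<Sum>i\<in>I. \<Sum>l\<le>m. holder_norm \<alpha> p0 (dq l (u i)))"
proof -
  have nn: "\<And>i l. i \<in> I \<Longrightarrow> l \<le> m \<Longrightarrow> 0 \<le> holder_norm \<alpha> p0 (dq l (u i))"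
    using norm_nonneg[OF p0] bh by blast
  then have nn2: "\<And>i. i \<in> I \<Longrightarrow> 0 \<le> (\<Sum>l\<le>m. holder_norm \<alpha> p0 (dq l (u i)))"
    by (intro sum_nonneg) auto
  then show "1 \<le> 1 + (\<Sum>i\<in>I. \<Sum>l\<le>m. holder_norm \<alpha> p0 (dq l (u i)))"
    by (simp add: sum_nonneg)
  fix i l assume i: "i \<in> I" and l: "l \<le> m"
  have "holder_norm \<alpha> p0 (dq l (u i)) \<le> (\<Sum>l\<le>m. holder_norm \<alpha> p0 (dq l (u i)))"
    using nn i l by (intro member_le_sum) auto
  also have "\<dots> \<le> (\<Sum>i\<in>I. \<Sum>l\<le>m. holder_norm \<alpha> p0 (dq l (u i)))"
    using nn2 i fin by (intro member_le_sum) auto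
  finally show "holder_norm \<alpha> p0 (dq l (u i)) \<le> 1 + (\<Sum>i\<in>I. \<Sum>l\<le>m. holder_norm \<alpha> p0 (dq l (u i)))" by simp
qed

lemma Econd_powr:
  assumes L: "L \<ge> 1" shows "Econd 2 (\<lambda>k. L powr (real k - 3/2))"
  unfolding Econd_def
proof (intro conjI allI impI)
  fix k :: nat assume "2 \<le> k" then show "1 \<le> L powr (real k - 3/2)" using L by (intro ge_one_powr_ge_zero) auto
next
  fix j k :: nat assume "2 \<le> j" "j \<le> k" then show "L powr (real j - 3/2) \<le> L powr (real k - 3/2)"
    using L by (intro powr_mono) auto
next
  fix j k :: nat assume "2 \<le> j" "2 \<le> k"
  have "L powr (real j - 3/2) * L powr (real k - 3/2) = L powr (real j - 3/2 + (real k - 3/2))"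
    by (rule powr_add[symmetric])
  also have "\<dots> \<le> L powr (real (j+k) - 3/2)" using L by (intro powr_mono) auto
  finally show "L powr (real j - 3/2) * L powr (real k - 3/2) \<le> L powr (real (j+k) - 3/2)" .
qed

lemma Econd_pow:
  assumes L: "L \<ge> (1::real)" and d: "s \<le> d"
  shows "Econd d (\<lambda>k. L ^ (k - s))"
  unfolding Econd_def
proof (intro conjI allI impI)
  fix k :: nat assume "d \<le> k" then show "1 \<le> L ^ (k - s)" using L by simp
next
  fix j k :: nat assume "d \<le> j" "j \<le> k" then show "L ^ (j - s) \<le> L ^ (k - s)"
    using L by (intro power_increasing) auto
next
  fix j k :: nat assume "d \<le> j" "d \<le> k"
  have "L ^ (j - s) * L ^ (k - s) = L ^ (j - s + (k - s))" by (simp add: power_add)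
  also have "\<dots> \<le> L ^ (j + k - s)" using L \<open>d \<le> j\<close> \<open>d \<le> k\<close> d by (intro power_increasing) auto
  finally show "L ^ (j - s) * L ^ (k - s) \<le> L ^ (j + k - s)" .
qed


lemma finish:
  assumes "holder_norm \<alpha> p0 F \<le> K * wt d E n" "d \<le> n" "K \<le> C * S ^ e" "Econd d E"
  shows "holder_norm \<alpha> p0 F \<le> C * S ^ e * E n * fact (n - d)"
proof -
  have w: "wt d E n = E n * fact (n - d)" using assms(2) unfolding wt_def by simp
  have "K * wt d E n \<le> C * S ^ e * wt d E n" using assms(3) wt_nonneg[OF assms(4)] by (rule mult_right_mono)
  then show ?thesis using assms(1) unfolding w by (simp add: mult.assoc)
qed

lemma Kbound:
  assumes "S \<ge> (1::real)" "a \<le> e" "c \<ge> 0"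
  shows "c * S ^ a \<le> (c + 1) * S ^ e"
proof -
  have "S ^ a \<le> S ^ e" using assms by (intro power_increasing) auto
  then have "c * S ^ a \<le> c * S ^ e" using assms by (intro mult_left_mono) auto
  also have "\<dots> \<le> (c + 1) * S ^ e" using assms by (intro mult_right_mono) auto
  finally show ?thesis .
qed


lemma part1:
  fixes p0 \<alpha> :: real
  assumes p0: "p0 < 0"
  shows "\<exists>C0 > 1. \<forall>(N::nat) (u::nat \<Rightarrow> real \<times> real \<Rightarrow> real) (L::real).
       N \<ge> 3 \<longrightarrow> (\<forall>i \<in> {1..5}. admissible \<alpha> p0 N (u i)) \<longrightarrow> L \<ge> 1 \<longrightarrow>
       (\<forall>i \<in> {1..5}. \<forall>n \<in> {2..N}.
          holder_norm \<alpha> p0 (dq n (u i)) \<le> L powr (real n - 3/2) * fact (n - 2)) \<longrightarrow>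
       (\<forall>n \<in> {2..N}.
          holder_norm \<alpha> p0 (dq n (\<lambda>x. \<Prod>i\<in>{1..5}. u i x))
            \<le> C0 * (1 + (\<Sum>i\<in>{1..5}. \<Sum>l\<le>1. holder_norm \<alpha> p0 (dq l (u i)))) ^ 16
                 * L powr (real n - 3/2) * fact (n - 2))"
proof (intro exI[of _ "600^4 + 1"] conjI allI impI ballI)
  show "(1::real) < 600^4 + 1" by simp
  fix N :: nat and u :: "nat \<Rightarrow> real \<times> real \<Rightarrow> real" and L :: real and n :: nat
  assume N: "N \<ge> 3" and adm: "\<forall>i \<in> {1..5}. admissible \<alpha> p0 N (u i)" and L: "L \<ge> 1"
    and hyp: "\<forall>i \<in> {1..5}. \<forall>n \<in> {2..N}. holder_norm \<alpha> p0 (dq n (u i)) \<le> L powr (real n - 3/2) * fact (n - 2)"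
    and n: "n \<in> {2..N}"
  define S where "S = 1 + (\<Sum>i\<in>{1..5::nat}. \<Sum>l\<le>1. holder_norm \<alpha> p0 (dq l (u i)))"
  define E where "E = (\<lambda>k::nat. L powr (real k - 3/2))"
  have E: "Econd 2 E" unfolding E_def using Econd_powr[OF L] .
  have bhs: "\<And>i l. i \<in> {1..5} \<Longrightarrow> l \<le> 1 \<Longrightarrow> bh \<alpha> p0 (dq l (u i))"
    using adm N unfolding admissible_def by (auto intro: in_holder_bh)
  note SB = S_bound[of p0 "{1..5::nat}" 1 \<alpha> u, OF p0 _ bhs, folded S_def, simplified]
  have S1: "S \<ge> 1" using SB(1) by simp
  have g: "good \<alpha> p0 N 2 E S (u i)" if i: "i \<in> {1..5}" for i
  proof (rule single_good[OF p0 _ E _ _ S1])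
    show "admissible \<alpha> p0 N (u i)" using adm i by blast
    fix k assume "2 \<le> k" "k \<le> N"
    then show "holder_norm \<alpha> p0 (dq k (u i)) \<le> E k * fact (k - 2)" using hyp i unfolding E_def by auto
  next
    fix k :: nat assume "k < 2" "k \<le> N"
    then show "holder_norm \<alpha> p0 (dq k (u i)) \<le> S" using SB(2)[of i k] i by auto
  qed
  have S0: "S \<ge> 0" using S1 by simp
  note gm = good_mult[OF p0 E comb2]
  have g45: "good \<alpha> p0 N 2 E (600 * S * S) (\<lambda>x. u 4 x * u 5 x)"
    by (rule gm[OF g g]) (use S0 in auto)
  have g345: "good \<alpha> p0 N 2 E (600 * S * (600 * S * S)) (\<lambda>x. u 3 x * (u 4 x * u 5 x))"
    by (rule gm[OF g g45]) (use S0 in auto)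
  have g2345: "good \<alpha> p0 N 2 E (600 * S * (600 * S * (600 * S * S))) (\<lambda>x. u 2 x * (u 3 x * (u 4 x * u 5 x)))"
    by (rule gm[OF g g345]) (use S0 in auto)
  have g12345: "good \<alpha> p0 N 2 E (600 * S * (600 * S * (600 * S * (600 * S * S)))) (\<lambda>x. u 1 x * (u 2 x * (u 3 x * (u 4 x * u 5 x))))"
    by (rule gm[OF g g2345]) (use S0 in auto)
  have set5: "{1..5::nat} = {1,2,3,4,5}" by auto
  have P: "(\<lambda>x. \<Prod>i\<in>{1..5}. u i x) = (\<lambda>x. u 1 x * (u 2 x * (u 3 x * (u 4 x * u 5 x))))"
    unfolding set5 by simp
  have K: "600 * S * (600 * S * (600 * S * (600 * S * S))) = 600^4 * S^5"
    by (simp add: eval_nat_numeral algebra_simps)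
  have "holder_norm \<alpha> p0 (dq n (\<lambda>x. \<Prod>i\<in>{1..5}. u i x)) \<le> (600^4 + 1) * S ^ 16 * E n * fact (n - 2)"
  proof (rule finish[OF _ _ _ E])
    show "holder_norm \<alpha> p0 (dq n (\<lambda>x. \<Prod>i\<in>{1..5}. u i x)) \<le> 600 * S * (600 * S * (600 * S * (600 * S * S))) * wt 2 E n"
      unfolding P using g12345 n unfolding good_def by auto
    show "2 \<le> n" using n by simp
    show "600 * S * (600 * S * (600 * S * (600 * S * S))) \<le> (600^4 + 1) * S ^ 16"
      unfolding K by (rule Kbound[OF S1]) auto
  qed
  then show "holder_norm \<alpha> p0 (dq n (\<lambda>x. \<Prod>i\<in>{1..5}. u i x))
            \<le> (600^4 + 1) * (1 + (\<Sum>i\<in>{1..5}. \<Sum>l\<le>1. holder_norm \<alpha> p0 (dq l (u i)))) ^ 16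
                 * L powr (real n - 3/2) * fact (n - 2)"
    unfolding S_def E_def .
qed


lemma part2:
  fixes p0 \<alpha> :: real
  assumes p0: "p0 < 0"
  shows "\<exists>C1 > 1. \<forall>(N::nat) (u::nat \<Rightarrow> real \<times> real \<Rightarrow> real) (L::real).
       N \<ge> 3 \<longrightarrow> (\<forall>i \<in> {1..3}. admissible \<alpha> p0 N (u i)) \<longrightarrow> L \<ge> 1 \<longrightarrow>
       (\<forall>i \<in> {1..3}. \<forall>n \<in> {2..N}.
          holder_norm \<alpha> p0 (dq n (u i)) \<le> L ^ (n - 1) * fact (n - 2)) \<longrightarrow>
       (\<forall>n \<in> {2..N}.
          holder_norm \<alpha> p0 (dq n (\<lambda>x. \<Prod>i\<in>{1..3}. u i x))
            \<le> C1 * (1 + (\<Sum>i\<in>{1..3}. \<Sum>l\<le>1. holder_norm \<alpha> p0 (dq l (u i)))) ^ 6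
                 * L ^ (n - 1) * fact (n - 2))"
proof (intro exI[of _ "600^2 + 1"] conjI allI impI ballI)
  show "(1::real) < 600^2 + 1" by simp
  fix N :: nat and u :: "nat \<Rightarrow> real \<times> real \<Rightarrow> real" and L :: real and n :: nat
  assume N: "N \<ge> 3" and adm: "\<forall>i \<in> {1..3}. admissible \<alpha> p0 N (u i)" and L: "L \<ge> 1"
    and hyp: "\<forall>i \<in> {1..3}. \<forall>n \<in> {2..N}. holder_norm \<alpha> p0 (dq n (u i)) \<le> L ^ (n - 1) * fact (n - 2)"
    and n: "n \<in> {2..N}"
  define S where "S = 1 + (\<Sum>i\<in>{1..3::nat}. \<Sum>l\<le>1. holder_norm \<alpha> p0 (dq l (u i)))"
  define E where "E = (\<lambda>k::nat. L ^ (k - 1))"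
  have E: "Econd 2 E" unfolding E_def using Econd_pow[OF L, of 1 2] by simp
  have bhs: "\<And>i l. i \<in> {1..3} \<Longrightarrow> l \<le> 1 \<Longrightarrow> bh \<alpha> p0 (dq l (u i))"
    using adm N unfolding admissible_def by (auto intro: in_holder_bh)
  note SB = S_bound[of p0 "{1..3::nat}" 1 \<alpha> u, OF p0 _ bhs, folded S_def, simplified]
  have S1: "S \<ge> 1" using SB(1) by simp
  have g: "good \<alpha> p0 N 2 E S (u i)" if i: "i \<in> {1..3}" for i
  proof (rule single_good[OF p0 _ E _ _ S1])
    show "admissible \<alpha> p0 N (u i)" using adm i by blast
    fix k assume "2 \<le> k" "k \<le> N"
    then show "holder_norm \<alpha> p0 (dq k (u i)) \<le> E k * fact (k - 2)" using hyp i unfolding E_def by auto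
  next
    fix k :: nat assume "k < 2" "k \<le> N"
    then show "holder_norm \<alpha> p0 (dq k (u i)) \<le> S" using SB(2)[of i k] i by auto
  qed
  have S0: "S \<ge> 0" using S1 by simp
  note gm = good_mult[OF p0 E comb2]
  have g23: "good \<alpha> p0 N 2 E (600 * S * S) (\<lambda>x. u 2 x * u 3 x)"
    by (rule gm[OF g g]) (use S0 in auto)
  have g123: "good \<alpha> p0 N 2 E (600 * S * (600 * S * S)) (\<lambda>x. u 1 x * (u 2 x * u 3 x))"
    by (rule gm[OF g g23]) (use S0 in auto)
  have set3: "{1..3::nat} = {1,2,3}" by auto
  have P: "(\<lambda>x. \<Prod>i\<in>{1..3}. u i x) = (\<lambda>x. u 1 x * (u 2 x * u 3 x))"
    unfolding set3 by simp
  have K: "600 * S * (600 * S * S) = 600^2 * S^3"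
    by (simp add: eval_nat_numeral algebra_simps)
  have "holder_norm \<alpha> p0 (dq n (\<lambda>x. \<Prod>i\<in>{1..3}. u i x)) \<le> (600^2 + 1) * S ^ 6 * E n * fact (n - 2)"
  proof (rule finish[OF _ _ _ E])
    show "holder_norm \<alpha> p0 (dq n (\<lambda>x. \<Prod>i\<in>{1..3}. u i x)) \<le> 600 * S * (600 * S * S) * wt 2 E n"
      unfolding P using g123 n unfolding good_def by auto
    show "2 \<le> n" using n by simp
    show "600 * S * (600 * S * S) \<le> (600^2 + 1) * S ^ 6"
      unfolding K by (rule Kbound[OF S1]) auto
  qed
  then show "holder_norm \<alpha> p0 (dq n (\<lambda>x. \<Prod>i\<in>{1..3}. u i x))
            \<le> (600^2 + 1) * (1 + (\<Sum>i\<in>{1..3}. \<Sum>l\<le>1. holder_norm \<alpha> p0 (dq l (u i)))) ^ 6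
                 * L ^ (n - 1) * fact (n - 2)"
    unfolding S_def E_def .
qed

lemma part3:
  fixes p0 \<alpha> :: real
  assumes p0: "p0 < 0"
  shows "\<exists>C2 > 1. \<forall>(N::nat) (u::nat \<Rightarrow> real \<times> real \<Rightarrow> real) (L::real).
       N \<ge> 3 \<longrightarrow> (\<forall>i \<in> {1..2}. admissible \<alpha> p0 N (u i)) \<longrightarrow> L \<ge> 1 \<longrightarrow>
       (\<forall>i \<in> {1..2}. \<forall>n \<in> {3..N}.
          holder_norm \<alpha> p0 (dq n (u i)) \<le> L ^ (n - 2) * fact (n - 3)) \<longrightarrow>
       (\<forall>n \<in> {3..N}.
          holder_norm \<alpha> p0 (dq n (\<lambda>x. \<Prod>i\<in>{1..2}. u i x))
            \<le> C2 * (1 + (\<Sum>i\<in>{1..2}. \<Sum>l\<le>2. holder_norm \<alpha> p0 (dq l (u i)))) ^ 2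
                 * L ^ (n - 2) * fact (n - 3))"
proof (intro exI[of _ "600 + 1"] conjI allI impI ballI)
  show "(1::real) < 600 + 1" by simp
  fix N :: nat and u :: "nat \<Rightarrow> real \<times> real \<Rightarrow> real" and L :: real and n :: nat
  assume N: "N \<ge> 3" and adm: "\<forall>i \<in> {1..2}. admissible \<alpha> p0 N (u i)" and L: "L \<ge> 1"
    and hyp: "\<forall>i \<in> {1..2}. \<forall>n \<in> {3..N}. holder_norm \<alpha> p0 (dq n (u i)) \<le> L ^ (n - 2) * fact (n - 3)"
    and n: "n \<in> {3..N}"
  define S where "S = 1 + (\<Sum>i\<in>{1..2::nat}. \<Sum>l\<le>2. holder_norm \<alpha> p0 (dq l (u i)))"
  define E where "E = (\<lambda>k::nat. L ^ (k - 2))"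
  have E: "Econd 3 E" unfolding E_def using Econd_pow[OF L, of 2 3] by simp
  have bhs: "\<And>i l. i \<in> {1..2} \<Longrightarrow> l \<le> 2 \<Longrightarrow> bh \<alpha> p0 (dq l (u i))"
    using adm N unfolding admissible_def by (auto intro: in_holder_bh)
  note SB = S_bound[of p0 "{1..2::nat}" 2 \<alpha> u, OF p0 _ bhs, folded S_def, simplified]
  have S1: "S \<ge> 1" using SB(1) by simp
  have g: "good \<alpha> p0 N 3 E S (u i)" if i: "i \<in> {1..2}" for i
  proof (rule single_good[OF p0 _ E _ _ S1])
    show "admissible \<alpha> p0 N (u i)" using adm i by blast
    fix k assume "3 \<le> k" "k \<le> N"
    then show "holder_norm \<alpha> p0 (dq k (u i)) \<le> E k * fact (k - 3)" using hyp i unfolding E_def by auto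
  next
    fix k :: nat assume "k < 3" "k \<le> N"
    then show "holder_norm \<alpha> p0 (dq k (u i)) \<le> S" using SB(2)[of i k] i by auto
  qed
  have S0: "S \<ge> 0" using S1 by simp
  note gm = good_mult[OF p0 E comb3]
  have g12: "good \<alpha> p0 N 3 E (600 * S * S) (\<lambda>x. u 1 x * u 2 x)"
    by (rule gm[OF g g]) (use S0 in auto)
  have set2: "{1..2::nat} = {1,2}" by auto
  have P: "(\<lambda>x. \<Prod>i\<in>{1..2}. u i x) = (\<lambda>x. u 1 x * u 2 x)"
    unfolding set2 by simp
  have K: "600 * S * S = 600 * S^2"
    by (simp add: eval_nat_numeral algebra_simps)
  have "holder_norm \<alpha> p0 (dq n (\<lambda>x. \<Prod>i\<in>{1..2}. u i x)) \<le> (600 + 1) * S ^ 2 * E n * fact (n - 3)"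
  proof (rule finish[OF _ _ _ E])
    show "holder_norm \<alpha> p0 (dq n (\<lambda>x. \<Prod>i\<in>{1..2}. u i x)) \<le> 600 * S * S * wt 3 E n"
      unfolding P using g12 n unfolding good_def by auto
    show "3 \<le> n" using n by simp
    show "600 * S * S \<le> (600 + 1) * S ^ 2"
      unfolding K by (rule Kbound[OF S1]) auto
  qed
  then show "holder_norm \<alpha> p0 (dq n (\<lambda>x. \<Prod>i\<in>{1..2}. u i x))
            \<le> (600 + 1) * (1 + (\<Sum>i\<in>{1..2}. \<Sum>l\<le>2. holder_norm \<alpha> p0 (dq l (u i)))) ^ 2
                 * L ^ (n - 2) * fact (n - 3)"
    unfolding S_def E_def .
qed


theorem lemma2p2:
  fixes p0 \<alpha> :: real
  assumes "p0 < 0" and "0 < \<alpha>" and "\<alpha> < 1"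
  shows
   "(\<exists>C0 > 1. \<forall>(N::nat) (u::nat \<Rightarrow> real \<times> real \<Rightarrow> real) (L::real).
       N \<ge> 3 \<longrightarrow> (\<forall>i \<in> {1..5}. admissible \<alpha> p0 N (u i)) \<longrightarrow> L \<ge> 1 \<longrightarrow>
       (\<forall>i \<in> {1..5}. \<forall>n \<in> {2..N}.
          holder_norm \<alpha> p0 (dq n (u i)) \<le> L powr (real n - 3/2) * fact (n - 2)) \<longrightarrow>
       (\<forall>n \<in> {2..N}.
          holder_norm \<alpha> p0 (dq n (\<lambda>x. \<Prod>i\<in>{1..5}. u i x))
            \<le> C0 * (1 + (\<Sum>i\<in>{1..5}. \<Sum>l\<le>1. holder_norm \<alpha> p0 (dq l (u i)))) ^ 16
                 * L powr (real n - 3/2) * fact (n - 2)))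
  \<and> (\<exists>C1 > 1. \<forall>(N::nat) (u::nat \<Rightarrow> real \<times> real \<Rightarrow> real) (L::real).
       N \<ge> 3 \<longrightarrow> (\<forall>i \<in> {1..3}. admissible \<alpha> p0 N (u i)) \<longrightarrow> L \<ge> 1 \<longrightarrow>
       (\<forall>i \<in> {1..3}. \<forall>n \<in> {2..N}.
          holder_norm \<alpha> p0 (dq n (u i)) \<le> L ^ (n - 1) * fact (n - 2)) \<longrightarrow>
       (\<forall>n \<in> {2..N}.
          holder_norm \<alpha> p0 (dq n (\<lambda>x. \<Prod>i\<in>{1..3}. u i x))
            \<le> C1 * (1 + (\<Sum>i\<in>{1..3}. \<Sum>l\<le>1. holder_norm \<alpha> p0 (dq l (u i)))) ^ 6
                 * L ^ (n - 1) * fact (n - 2)))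
  \<and> (\<exists>C2 > 1. \<forall>(N::nat) (u::nat \<Rightarrow> real \<times> real \<Rightarrow> real) (L::real).
       N \<ge> 3 \<longrightarrow> (\<forall>i \<in> {1..2}. admissible \<alpha> p0 N (u i)) \<longrightarrow> L \<ge> 1 \<longrightarrow>
       (\<forall>i \<in> {1..2}. \<forall>n \<in> {3..N}.
          holder_norm \<alpha> p0 (dq n (u i)) \<le> L ^ (n - 2) * fact (n - 3)) \<longrightarrow>
       (\<forall>n \<in> {3..N}.
          holder_norm \<alpha> p0 (dq n (\<lambda>x. \<Prod>i\<in>{1..2}. u i x))
            \<le> C2 * (1 + (\<Sum>i\<in>{1..2}. \<Sum>l\<le>2. holder_norm \<alpha> p0 (dq l (u i)))) ^ 2
                 * L ^ (n - 2) * fact (n - 3)))"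
    using part1[OF assms(1)] part2[OF assms(1)] part3[OF assms(1)] by blast

end
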